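(* Let $\mathcal{A}$ be a pOC with state set $Q$ whose underlying chain $\mathcal{X}$ is strongly connected, and let $t$ be its trend. There is a vector $v\in\mathbb{R}^Q$ with the following two properties. - For every initial configuration, the process $m^{(0)},m^{(1)},\dots$ on runs of $\mathcal{M}_\mathcal{A}$ defined by $$m^{(i)}=\begin{cases}c^{(i)}+v_{p^{(i)}}-i\cdot t & \text{if } c^{(j)}\ge1 \text{ for all } 0\le j<i,\\ m^{(i-1)} & \text{otherwise}\end{cases}$$ is a martingale. Here $p^{(i)}$ and $c^{(i)}$ are the control state and counter value of the $i$-th configuration of the run. - $v_{\max}-v_{\min}\le 2|Q|/x_{\min}^{|Q|}$, where $x_{\min}$ is the smallest positive transition probability in $\mathcal{X}$, and $v_{\max}$ and $v_{\min}$ are the maximal and minimal components of $v$.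
   Context: A pOC is $\mathcal{A}=(Q,\delta^{=0},\delta^{>0},P^{=0},P^{>0})$ with the following components. - $\delta^{>0}\subseteq Q\times\{-1,0,1\}\times Q$ are the positive rules and $\delta^{=0}\subseteq Q\times\{0,1\}\times Q$ are the zero rules. Every state has both kinds of outgoing rule. - $P^{>0}$ and $P^{=0}$ are positive probability distributions over the outgoing rules of each state. $\mathcal{M}_\mathcal{A}$ is the Markov chain on configurations $p(i)$ with the following transitions: - $p(0)\to q(c)$ with probability $P^{=0}(p,c,q)$; - for $i\ge1$, $p(i)\to q(i+c)$ with probability $P^{>0}(p,c,q)$. $\mathcal{X}$ is the finite Markov chain on $Q$ with transition matrix $A_{pq}=\sum_cP^{>0}(p,c,q)$. With $\alpha$ its invariant distribution and $s_p=\sum_{(p,c,q)\in\delta^{>0}}P^{>0}(p,c,q)c$, the trend is $t=\alpha s$. *)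

theory Defs
  imports Complex_Main
begin

text \<open>A pOC is given by its positive rules dP (subset of Q x {-1,0,1} x Q), its zero rules
  d0 (subset of Q x {0,1} x Q), and the probability assignments PP, P0
  (functions 'q => int => 'q => real, where P p c q is the probability of rule (p,c,q)).\<close>

type_synonym 'q config = "'q \<times> nat"

definition pOC ::
  "('q::finite \<times> int \<times> 'q) set \<Rightarrow> ('q \<times> int \<times> 'q) set \<Rightarrow>
   ('q \<Rightarrow> int \<Rightarrow> 'q \<Rightarrow> real) \<Rightarrow> ('q \<Rightarrow> int \<Rightarrow> 'q \<Rightarrow> real) \<Rightarrow> bool" where
  "pOC d0 dP P0 PP \<longleftrightarrow>
     dP \<subseteq> UNIV \<times> {-1, 0, 1} \<times> UNIV \<and>
     d0 \<subseteq> UNIV \<times> {0, 1} \<times> UNIV \<and>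
     (\<forall>p. \<exists>c q. (p, c, q) \<in> dP) \<and>
     (\<forall>p. \<exists>c q. (p, c, q) \<in> d0) \<and>
     (\<forall>p c q. ((p, c, q) \<in> dP \<longrightarrow> PP p c q > 0) \<and> ((p, c, q) \<notin> dP \<longrightarrow> PP p c q = 0)) \<and>
     (\<forall>p c q. ((p, c, q) \<in> d0 \<longrightarrow> P0 p c q > 0) \<and> ((p, c, q) \<notin> d0 \<longrightarrow> P0 p c q = 0)) \<and>
     (\<forall>p. (\<Sum>q\<in>UNIV. \<Sum>c\<in>{-1, 0, 1}. PP p c q) = 1) \<and>
     (\<forall>p. (\<Sum>q\<in>UNIV. \<Sum>c\<in>{0, 1}. P0 p c q) = 1)"

definition MA_prob ::
  "('q \<Rightarrow> int \<Rightarrow> 'q \<Rightarrow> real) \<Rightarrow> ('q \<Rightarrow> int \<Rightarrow> 'q \<Rightarrow> real) \<Rightarrow> 'q config \<Rightarrow> 'q config \<Rightarrow> real" where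
  "MA_prob P0 PP x y =
     (if snd x = 0 then P0 (fst x) (int (snd y) - int (snd x)) (fst y)
      else PP (fst x) (int (snd y) - int (snd x)) (fst y))"

definition X_mat :: "('q \<Rightarrow> int \<Rightarrow> 'q \<Rightarrow> real) \<Rightarrow> 'q \<Rightarrow> 'q \<Rightarrow> real" where
  "X_mat PP p q = (\<Sum>c\<in>{-1, 0, 1}. PP p c q)"

definition strongly_connected :: "('q \<Rightarrow> 'q \<Rightarrow> real) \<Rightarrow> bool" where
  "strongly_connected A \<longleftrightarrow> (\<forall>p q. (p, q) \<in> {(a, b). A a b > 0}\<^sup>*)"

definition invariant_distribution :: "('q::finite \<Rightarrow> 'q \<Rightarrow> real) \<Rightarrow> ('q \<Rightarrow> real) \<Rightarrow> bool" where
  "invariant_distribution A \<alpha> \<longleftrightarrow>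
     (\<forall>p. \<alpha> p \<ge> 0) \<and> (\<Sum>p\<in>UNIV. \<alpha> p) = 1 \<and> (\<forall>q. (\<Sum>p\<in>UNIV. \<alpha> p * A p q) = \<alpha> q)"

definition drift :: "('q::finite \<Rightarrow> int \<Rightarrow> 'q \<Rightarrow> real) \<Rightarrow> 'q \<Rightarrow> real" where
  "drift PP p = (\<Sum>q\<in>UNIV. \<Sum>c\<in>{-1, 0, 1}. PP p c q * real_of_int c)"

definition trend :: "('q::finite \<Rightarrow> int \<Rightarrow> 'q \<Rightarrow> real) \<Rightarrow> ('q \<Rightarrow> real) \<Rightarrow> real" where
  "trend PP \<alpha> = (\<Sum>p\<in>UNIV. \<alpha> p * drift PP p)"

definition x_min :: "('q::finite \<Rightarrow> 'q \<Rightarrow> real) \<Rightarrow> real" where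
  "x_min A = Min {A p q | p q. A p q > 0}"

primrec m_proc :: "('q \<Rightarrow> real) \<Rightarrow> real \<Rightarrow> (nat \<Rightarrow> 'q config) \<Rightarrow> nat \<Rightarrow> real" where
  "m_proc v t x 0 = real (snd (x 0)) + v (fst (x 0)) - 0 * t"
| "m_proc v t x (Suc i) =
     (if \<forall>j < Suc i. snd (x j) \<ge> 1
      then real (snd (x (Suc i))) + v (fst (x (Suc i))) - real (Suc i) * t
      else m_proc v t x i)"

text \<open>Martingale property of a process M (M x i depending only on x 0, ..., x i) on the
  runs of M_A, w.r.t. the natural filtration: for every initial configuration and every
  finite run prefix x 0 ... x n of positive probability, the conditional expectation of
  M at time n+1 given the prefix equals M at time n. (The successors of (p,c) lie in
  UNIV x {..c+1}, so the sum is the full conditional expectation; all values are finite,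
  hence integrable.)\<close>
definition pOC_martingale ::
  "('q::finite \<Rightarrow> int \<Rightarrow> 'q \<Rightarrow> real) \<Rightarrow> ('q \<Rightarrow> int \<Rightarrow> 'q \<Rightarrow> real) \<Rightarrow>
   ((nat \<Rightarrow> 'q config) \<Rightarrow> nat \<Rightarrow> real) \<Rightarrow> bool" where
  "pOC_martingale P0 PP M \<longleftrightarrow>
     (\<forall>x n. (\<forall>j<n. MA_prob P0 PP (x j) (x (Suc j)) > 0) \<longrightarrow>
        (\<Sum>y\<in>UNIV \<times> {..Suc (snd (x n))}. MA_prob P0 PP (x n) y * M (x(Suc n := y)) (Suc n))
          = M x n)"

end

theory Submission imports Defs "HOL-Analysis.Analysis" begin

lemma cross_edge:
  assumes "(p, r) \<in> R\<^sup>*" "p \<in> S" "r \<notin> S"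
  shows "\<exists>a b. (a, b) \<in> R \<and> a \<in> S \<and> b \<notin> S"
  using assms
proof (induction rule: rtrancl_induct)
  case base then show ?case by simp
next
  case (step y z)
  then show ?case by (cases "y \<in> S") auto
qed

lemma sum_bound:
  fixes A :: "'q::finite \<Rightarrow> 'q \<Rightarrow> real"
  assumes nn: "\<And>p q. A p q \<ge> 0" and rows: "\<And>p. (\<Sum>q\<in>UNIV. A p q) = 1"
    and le: "\<And>q. g q \<le> M"
  shows "(\<Sum>q\<in>UNIV. A a q * g q) \<le> A a b * g b + (1 - A a b) * M"
proof -
  have "(\<Sum>q\<in>UNIV. A a q * g q) = A a b * g b + (\<Sum>q\<in>UNIV - {b}. A a q * g q)"
    by (simp add: sum.remove)
  also have "(\<Sum>q\<in>UNIV - {b}. A a q * g q) \<le> (\<Sum>q\<in>UNIV - {b}. A a q * M)"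
    by (intro sum_mono mult_left_mono le nn)
  also have "(\<Sum>q\<in>UNIV - {b}. A a q * M) = (\<Sum>q\<in>UNIV - {b}. A a q) * M"
    by (simp add: sum_distrib_right)
  also have "(\<Sum>q\<in>UNIV - {b}. A a q) = 1 - A a b"
    using rows[of a] sum.remove[of UNIV b "A a"] by simp
  finally show ?thesis by simp
qed

lemma max_principle:
  fixes A :: "'q::finite \<Rightarrow> 'q \<Rightarrow> real"
  assumes nn: "\<And>p q. A p q \<ge> 0" and rows: "\<And>p. (\<Sum>q\<in>UNIV. A p q) = 1"
    and sc: "strongly_connected A"
    and ur: "u r \<le> 0" and sub: "\<And>p. p \<noteq> r \<Longrightarrow> u p \<le> (\<Sum>q\<in>UNIV. A p q * u q)"
  shows "u p \<le> 0"
proof -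
  define M where "M = Max (range u)"
  have uM: "u q \<le> M" for q unfolding M_def by simp
  have "M \<le> 0"
  proof (rule ccontr)
    assume "\<not> M \<le> 0"
    hence Mpos: "M > 0" by simp
    have "M \<in> range u" unfolding M_def by (rule Max_in) auto
    then obtain p0 where p0: "u p0 = M" by auto
    have "r \<notin> {q. u q = M}" using ur Mpos by auto
    moreover have "(p0, r) \<in> {(a, b). A a b > 0}\<^sup>*" using sc unfolding strongly_connected_def by blast
    ultimately have "\<exists>a b. (a, b) \<in> {(a, b). A a b > 0} \<and> a \<in> {q. u q = M} \<and> b \<notin> {q. u q = M}"
      using cross_edge[of p0 r _ "{q. u q = M}"] p0 by blast
    then obtain a b where ab: "A a b > 0" "u a = M" "u b \<noteq> M" by auto
    have "a \<noteq> r" using ab ur Mpos by auto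
    have "u b < M" using ab uM[of b] by simp
    have "u a \<le> A a b * u b + (1 - A a b) * M"
      using sub[OF \<open>a \<noteq> r\<close>] sum_bound[of A u M a b, OF nn rows uM] by linarith
    also have "\<dots> < A a b * M + (1 - A a b) * M"
      using ab(1) \<open>u b < M\<close> by simp
    finally show False using ab by (simp add: algebra_simps)
  qed
  thus ?thesis using uM[of p] by simp
qed

lemma solve_exists:
  fixes A :: "'q::finite \<Rightarrow> 'q \<Rightarrow> real"
  assumes nn: "\<And>p q. A p q \<ge> 0" and rows: "\<And>p. (\<Sum>q\<in>UNIV. A p q) = 1"
    and sc: "strongly_connected A"
  shows "\<exists>u. u r = 0 \<and> (\<forall>p. p \<noteq> r \<longrightarrow> u p = f p + (\<Sum>q\<in>UNIV. A p q * u q))"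
proof -
  define L :: "real^'q \<Rightarrow> real^'q" where
    "L w = (\<chi> p. if p = r then w $ r else w $ p - (\<Sum>q\<in>UNIV. A p q * w $ q))" for w
  have lin: "linear L"
  proof (rule linearI)
    fix x y :: "real^'q"
    show "L (x + y) = L x + L y"
      unfolding L_def vec_eq_iff by (simp add: sum.distrib distrib_left)
  next
    fix c :: real and x :: "real^'q"
    show "L (c *\<^sub>R x) = c *\<^sub>R L x"
      unfolding L_def vec_eq_iff by (simp add: sum_distrib_left right_diff_distrib mult.left_commute)
  qed
  have inj: "inj L"
  proof -
    have "w = 0" if "L w = 0" for w
    proof -
      have e: "(if p = r then w $ r else w $ p - (\<Sum>q\<in>UNIV. A p q * w $ q)) = 0" for p
        using that unfolding L_def vec_eq_iff by simp
      have r0: "w $ r = 0" using e[of r] by simp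
      have h: "p \<noteq> r \<Longrightarrow> w $ p = (\<Sum>q\<in>UNIV. A p q * w $ q)" for p using e[of p] by simp
      have le: "w $ p \<le> 0" for p
        by (rule max_principle[OF nn rows sc, of "\<lambda>q. w $ q" r]) (use r0 in simp, metis h order_refl)
      have ge: "- w $ p \<le> 0" for p
        by (rule max_principle[OF nn rows sc, of "\<lambda>q. - w $ q" r])
           (use r0 in simp, simp add: h sum_negf)
      show ?thesis using le ge by (simp add: vec_eq_iff) (meson antisym neg_le_0_iff_le)
    qed
    thus ?thesis using lin by (simp add: linear_injective_0)
  qed
  have "surj L" by (rule linear_injective_imp_surjective[OF lin inj]) simp
  then obtain w where w: "(\<chi> p. if p = r then 0 else f p) = L w" by (rule surjE)
  have e: "(if p = r then w $ r else w $ p - (\<Sum>q\<in>UNIV. A p q * w $ q)) = (if p = r then 0 else f p)" for p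
    using arg_cong[OF w, of "\<lambda>z. z $ p"] by (simp add: L_def)
  have "w $ r = 0" using e[of r] by simp
  moreover have "p \<noteq> r \<Longrightarrow> w $ p = f p + (\<Sum>q\<in>UNIV. A p q * w $ q)" for p
    using e[of p] by simp
  ultimately show ?thesis by blast
qed

lemma hit_bound:
  fixes A :: "'q::finite \<Rightarrow> 'q \<Rightarrow> real"
  assumes nn: "\<And>p q. A p q \<ge> 0" and rows: "\<And>p. (\<Sum>q\<in>UNIV. A p q) = 1"
    and sc: "strongly_connected A"
    and xpos: "0 < xm" and x1: "xm \<le> 1" and xle: "\<And>p q. A p q > 0 \<Longrightarrow> xm \<le> A p q"
    and hr: "h r = 0" and hp: "\<And>p. p \<noteq> r \<Longrightarrow> h p = 1 + (\<Sum>q\<in>UNIV. A p q * h q)"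
  shows "h p \<le> real (card (UNIV::'q set)) / xm ^ card (UNIV::'q set)"
proof -
  define n where "n = card (UNIV::'q set)"
  define M where "M = Max (range h)"
  have hM: "h q \<le> M" for q unfolding M_def by simp
  have M0: "M \<ge> 0" using hM[of r] hr by simp
  define U where "U k = {p. h p \<le> real k + M * (1 - xm ^ k)}" for k
  have rU: "r \<in> U k" for k
  proof -
    have "xm ^ k \<le> 1" using xpos x1 by (simp add: power_le_one)
    thus ?thesis using hr M0 by (simp add: U_def)
  qed
  have mono: "U k \<subseteq> U (Suc k)" for k
  proof
    fix p assume "p \<in> U k"
    have "xm ^ Suc k \<le> xm ^ k" using xpos x1 by (simp add: power_decreasing)
    hence "M * (1 - xm ^ k) \<le> M * (1 - xm ^ Suc k)" using M0 by (simp add: mult_left_mono)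
    thus "p \<in> U (Suc k)" using \<open>p \<in> U k\<close> by (simp add: U_def)
  qed
  have step: "a \<in> U (Suc k)" if ab: "A a b > 0" "b \<in> U k" for a b k
  proof (cases "a = r")
    case True then show ?thesis using rU by simp
  next
    case False
    define y where "y = A a b"
    have y1: "y \<le> 1" unfolding y_def using rows[of a] nn member_le_sum[of b UNIV "A a"] by auto
    have yx: "xm \<le> y" unfolding y_def using xle ab by simp
    have hb: "h b \<le> real k + M * (1 - xm ^ k)" using ab U_def by simp
    have "h a \<le> 1 + (y * h b + (1 - y) * M)"
      using hp[OF False] sum_bound[of A h M a b, OF nn rows hM] unfolding y_def by linarith
    also have "y * h b \<le> y * (real k + M * (1 - xm ^ k))"
      using hb y1 yx xpos by (intro mult_left_mono) auto
    finally have 1: "h a \<le> 1 + y * real k + M - M * (y * xm ^ k)" by (simp add: algebra_simps)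
    have "y * real k \<le> 1 * real k" using y1 by (intro mult_right_mono) auto
    moreover have "M * (xm * xm ^ k) \<le> M * (y * xm ^ k)"
      using M0 yx xpos by (intro mult_left_mono mult_right_mono) auto
    ultimately have "h a \<le> real (Suc k) + M * (1 - xm ^ Suc k)" using 1 by (simp add: algebra_simps)
    thus ?thesis by (simp add: U_def)
  qed
  have grow: "U k = UNIV \<or> k + 1 \<le> card (U k)" for k
  proof (induction k)
    case 0
    have "{r} \<subseteq> U 0" using rU by auto
    hence "card {r} \<le> card (U 0)" by (intro card_mono) auto
    thus ?case by simp
  next
    case (Suc k)
    show ?case
    proof (cases "U k = UNIV")
      case True then show ?thesis using mono[of k] by auto
    next
      case False
      then obtain q where q: "q \<notin> U k" by auto
      have "(q, r) \<in> {(a, b). A a b > 0}\<^sup>*" using sc unfolding strongly_connected_def by blast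
      hence "\<exists>a b. (a, b) \<in> {(a, b). A a b > 0} \<and> a \<in> - U k \<and> b \<notin> - U k"
        using cross_edge[of q r _ "- U k"] q rU[of k] by blast
      then obtain a b where ab: "A a b > 0" "a \<notin> U k" "b \<in> U k" by auto
      have "insert a (U k) \<subseteq> U (Suc k)" using step[OF ab(1) ab(3)] mono[of k] by auto
      hence "card (insert a (U k)) \<le> card (U (Suc k))" by (intro card_mono) auto
      moreover have "card (insert a (U k)) = Suc (card (U k))" using ab(2) by simp
      ultimately show ?thesis using Suc.IH False by simp
    qed
  qed
  have n1: "n \<ge> 1" unfolding n_def by (simp add: Suc_leI)
  have "U (n - 1) = UNIV"
  proof -
    have "U (n - 1) = UNIV \<or> n \<le> card (U (n - 1))" using grow[of "n - 1"] n1 by simp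
    thus ?thesis
    proof (elim disjE)
      assume "n \<le> card (U (n - 1))"
      thus ?thesis unfolding n_def by (intro card_seteq) auto
    qed simp
  qed
  moreover have "M \<in> range h" unfolding M_def by (rule Max_in) auto
  then obtain p0 where p0: "h p0 = M" by auto
  ultimately have "M \<le> real (n - 1) + M * (1 - xm ^ (n - 1))" unfolding U_def by auto
  hence A1: "M * xm ^ (n - 1) \<le> real (n - 1)" by (simp add: algebra_simps)
  have "xm ^ n \<le> xm ^ (n - 1)" using xpos x1 by (intro power_decreasing) auto
  hence "M * xm ^ n \<le> M * xm ^ (n - 1)" using M0 by (intro mult_left_mono) auto
  hence "M * xm ^ n \<le> real n" using A1 n1 by (simp add: of_nat_diff)
  hence "M \<le> real n / xm ^ n" using xpos by (simp add: pos_le_divide_eq)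
  thus ?thesis using hM[of p] unfolding n_def by simp
qed

lemma sum3: "(\<Sum>c\<in>{-1, 0, 1::int}. g c) = g (-1) + g 0 + (g 1 :: real)"
  by simp

lemma sum_prod_split: "(\<Sum>y\<in>A \<times> B. f y) = (\<Sum>q\<in>A. \<Sum>c\<in>B. f (q, c))"
  by (simp add: sum.cartesian_product)

lemma sum_succ_pos:
  fixes G :: "int \<Rightarrow> real"
  assumes c: "c \<ge> 1" and G: "\<And>d. d \<notin> {-1, 0, 1} \<Longrightarrow> G d = 0"
  shows "(\<Sum>c'\<in>{..Suc c}. G (int c' - int c) * F c') = G (-1) * F (c - 1) + G 0 * F c + G 1 * F (Suc c)"
proof -
  have "(\<Sum>c'\<in>{..Suc c}. G (int c' - int c) * F c') = (\<Sum>c'\<in>{c - 1, c, Suc c}. G (int c' - int c) * F c')"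
  proof (rule sum.mono_neutral_right)
    show "\<forall>i\<in>{..Suc c} - {c - 1, c, Suc c}. G (int i - int c) * F i = 0"
    proof
      fix i assume "i \<in> {..Suc c} - {c - 1, c, Suc c}"
      hence "int i - int c \<notin> {-1, 0, 1}" using c by auto
      thus "G (int i - int c) * F i = 0" using G by simp
    qed
  qed auto
  also have "\<dots> = G (-1) * F (c - 1) + G 0 * F c + G 1 * F (Suc c)"
  proof -
    obtain k where k: "c = Suc k" using c by (cases c) auto
    show ?thesis unfolding k by (simp add: algebra_simps)
  qed
  finally show ?thesis .
qed

lemma sum_succ_zero:
  fixes G :: "int \<Rightarrow> real"
  shows "(\<Sum>c'\<in>{..Suc 0}. G (int c' - int 0) * F c') = G 0 * F 0 + G 1 * F (Suc 0)"
  by (simp add: atMost_Suc)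

lemma m_local: "(\<And>j. j \<le> n \<Longrightarrow> x j = y j) \<Longrightarrow> m_proc v t x n = m_proc v t y n"
proof (induction n)
  case 0 then show ?case by simp
next
  case (Suc n)
  have "(\<forall>j<Suc n. 1 \<le> snd (x j)) = (\<forall>j<Suc n. 1 \<le> snd (y j))" using Suc.prems by auto
  moreover have "m_proc v t x n = m_proc v t y n" using Suc by simp
  moreover have "x (Suc n) = y (Suc n)" using Suc.prems by simp
  ultimately show ?case by (simp only: m_proc.simps)
qed

lemma m_active: "(\<forall>j<n. 1 \<le> snd (x j)) \<Longrightarrow> m_proc v t x n = real (snd (x n)) + v (fst (x n)) - real n * t"
  by (cases n) auto

theorem mainTheorem11:
  fixes d0 dP :: "('q::finite \<times> int \<times> 'q) set"
    and P0 PP :: "'q \<Rightarrow> int \<Rightarrow> 'q \<Rightarrow> real"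
    and \<alpha> :: "'q \<Rightarrow> real"
  assumes "pOC d0 dP P0 PP"
    and "strongly_connected (X_mat PP)"
    and "invariant_distribution (X_mat PP) \<alpha>"
  shows "\<exists>v :: 'q \<Rightarrow> real.
           pOC_martingale P0 PP (m_proc v (trend PP \<alpha>)) \<and>
           Max (range v) - Min (range v)
             \<le> 2 * real (card (UNIV :: 'q set)) / x_min (X_mat PP) ^ card (UNIV :: 'q set)"
proof -
  note poc = assms(1)[unfolded pOC_def]
  have PPnn: "PP p c q \<ge> 0" for p c q using poc by (metis less_eq_real_def order_refl)
  have P0nn: "P0 p c q \<ge> 0" for p c q using poc by (metis less_eq_real_def order_refl)
  have PPz: "c \<notin> {-1, 0, 1} \<Longrightarrow> PP p c q = 0" for p c q using poc by blast
  have P0z: "c \<notin> {0, 1} \<Longrightarrow> P0 p c q = 0" for p c q using poc by blast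
  have PProw: "(\<Sum>q\<in>UNIV. PP p (-1) q + PP p 0 q + PP p 1 q) = 1" for p
    using poc by (simp add: sum3)
  have P0row: "(\<Sum>q\<in>UNIV. P0 p 0 q + P0 p 1 q) = 1" for p
    using poc by simp
  define A where "A = X_mat PP"
  have A_eq: "A p q = PP p (-1) q + PP p 0 q + PP p 1 q" for p q
    unfolding A_def X_mat_def by (simp add: sum3)
  have nn: "A p q \<ge> 0" for p q unfolding A_eq using PPnn by (simp add: add_nonneg_nonneg)
  have rows: "(\<Sum>q\<in>UNIV. A p q) = 1" for p unfolding A_eq by (rule PProw)
  have sc: "strongly_connected A" using assms(2) A_def by simp
  define t where "t = trend PP \<alpha>"
  define s where "s = drift PP"
  have s_eq: "s p = (\<Sum>q\<in>UNIV. PP p 1 q - PP p (-1) q)" for p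
    unfolding s_def drift_def by (simp add: sum3)
  have s_bd: "-1 \<le> s p \<and> s p \<le> 1" for p
  proof -
    have "(\<Sum>q\<in>UNIV. PP p 1 q - PP p (-1) q) \<le> (\<Sum>q\<in>UNIV. PP p (-1) q + PP p 0 q + PP p 1 q)"
      by (intro sum_mono) (use PPnn in \<open>smt (verit)\<close>)
    moreover have "-(\<Sum>q\<in>UNIV. PP p (-1) q + PP p 0 q + PP p 1 q) \<le> (\<Sum>q\<in>UNIV. PP p 1 q - PP p (-1) q)"
      unfolding sum_negf[symmetric] by (intro sum_mono) (use PPnn in \<open>smt (verit)\<close>)
    ultimately show ?thesis unfolding s_eq PProw by simp
  qed
  have inv: "\<And>p. \<alpha> p \<ge> 0" "(\<Sum>p\<in>UNIV. \<alpha> p) = 1" "\<And>q. (\<Sum>p\<in>UNIV. \<alpha> p * A p q) = \<alpha> q"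
    using assms(3) unfolding invariant_distribution_def A_def by auto
  have t_eq: "t = (\<Sum>p\<in>UNIV. \<alpha> p * s p)" unfolding t_def trend_def s_def ..
  have t_bd: "-1 \<le> t \<and> t \<le> 1"
  proof -
    have "(\<Sum>p\<in>UNIV. \<alpha> p * s p) \<le> (\<Sum>p\<in>UNIV. \<alpha> p * 1)"
      by (intro sum_mono mult_left_mono) (use s_bd inv in auto)
    moreover have "(\<Sum>p\<in>UNIV. \<alpha> p * (-1)) \<le> (\<Sum>p\<in>UNIV. \<alpha> p * s p)"
      by (intro sum_mono mult_left_mono) (use s_bd inv in auto)
    ultimately show ?thesis unfolding t_eq using inv(2) by (simp add: sum_negf)
  qed
  have apos: "\<alpha> r > 0" for r
  proof -
    obtain p where p: "\<alpha> p > 0"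
    proof (rule ccontr)
      assume "\<not> thesis"
      hence "\<alpha> p \<le> 0" for p using that by (meson not_less)
      hence "\<alpha> p = 0" for p using inv(1) by (meson antisym)
      thus False using inv(2) by simp
    qed
    have "(p, r) \<in> {(a, b). A a b > 0}\<^sup>*" using sc unfolding strongly_connected_def by blast
    thus ?thesis
    proof (induction rule: rtrancl_induct)
      case base then show ?case using p .
    next
      case (step y z)
      have "\<alpha> y * A y z \<le> (\<Sum>p\<in>UNIV. \<alpha> p * A p z)"
        by (rule member_le_sum) (use inv nn in auto)
      moreover have "\<alpha> y * A y z > 0" using step by simp
      ultimately show ?case using inv(3)[of z] by simp
    qed
  qed
  define r :: 'q where "r = undefined"
  obtain h where hr: "h r = 0" and hp: "\<And>p. p \<noteq> r \<Longrightarrow> h p = 1 + (\<Sum>q\<in>UNIV. A p q * h q)"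
    using solve_exists[OF nn rows sc, of r "\<lambda>_. 1"] by blast
  obtain v where vr: "v r = 0" and vp: "\<And>p. p \<noteq> r \<Longrightarrow> v p = (s p - t) + (\<Sum>q\<in>UNIV. A p q * v q)"
    using solve_exists[OF nn rows sc, of r "\<lambda>p. s p - t"] by blast
  have poisson: "v p = (s p - t) + (\<Sum>q\<in>UNIV. A p q * v q)" for p
  proof (cases "p = r")
    case False then show ?thesis using vp by simp
  next
    case True
    define w where "w p = (s p - t) + (\<Sum>q\<in>UNIV. A p q * v q) - v p" for p
    have w0: "p \<noteq> r \<Longrightarrow> w p = 0" for p using vp[of p] unfolding w_def by simp
    have swap: "(\<Sum>p\<in>UNIV. \<alpha> p * (\<Sum>q\<in>UNIV. A p q * v q)) = (\<Sum>q\<in>UNIV. \<alpha> q * v q)"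
    proof -
      have "(\<Sum>p\<in>UNIV. \<alpha> p * (\<Sum>q\<in>UNIV. A p q * v q)) = (\<Sum>p\<in>UNIV. \<Sum>q\<in>UNIV. \<alpha> p * A p q * v q)"
        by (simp add: sum_distrib_left mult.assoc)
      also have "\<dots> = (\<Sum>q\<in>UNIV. \<Sum>p\<in>UNIV. \<alpha> p * A p q * v q)" by (rule sum.swap)
      also have "\<dots> = (\<Sum>q\<in>UNIV. (\<Sum>p\<in>UNIV. \<alpha> p * A p q) * v q)"
        by (simp add: sum_distrib_right)
      also have "\<dots> = (\<Sum>q\<in>UNIV. \<alpha> q * v q)" using inv(3) by simp
      finally show ?thesis .
    qed
    have "(\<Sum>p\<in>UNIV. \<alpha> p * w p) = (\<Sum>p\<in>UNIV. \<alpha> p * s p) - t * (\<Sum>p\<in>UNIV. \<alpha> p)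
        + (\<Sum>p\<in>UNIV. \<alpha> p * (\<Sum>q\<in>UNIV. A p q * v q)) - (\<Sum>p\<in>UNIV. \<alpha> p * v p)"
      unfolding w_def by (simp add: algebra_simps sum.distrib sum_subtractf sum_distrib_left)
    also have "\<dots> = 0" using swap t_eq inv(2) by simp
    finally have "(\<Sum>p\<in>UNIV. \<alpha> p * w p) = 0" .
    moreover have "(\<Sum>p\<in>UNIV. \<alpha> p * w p) = \<alpha> r * w r"
      by (subst sum.remove[of UNIV r]) (auto simp: w0)
    ultimately have "w r = 0" using apos[of r] by simp
    thus ?thesis using True unfolding w_def by simp
  qed
  define xm where "xm = x_min A"
  define S where "S = {A p q | p q. A p q > 0}"
  have finS: "finite S"
  proof -
    have "S \<subseteq> (\<lambda>(p, q). A p q) ` UNIV" unfolding S_def by auto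
    thus ?thesis by (rule finite_subset) simp
  qed
  have A1: "A p q \<le> 1" for p q using rows[of p] nn member_le_sum[of q UNIV "A p"] by auto
  obtain q0 where q0: "A r q0 > 0"
  proof (rule ccontr)
    assume "\<not> thesis"
    hence "A r q \<le> 0" for q using that by (meson not_less)
    hence "A r q = 0" for q using nn by (meson antisym)
    thus False using rows[of r] by simp
  qed
  have neS: "S \<noteq> {}" using q0 unfolding S_def by auto
  have xm_S: "xm = Min S" unfolding xm_def x_min_def S_def ..
  have xm_facts: "0 < xm" "xm \<le> 1" "\<And>p q. A p q > 0 \<Longrightarrow> xm \<le> A p q"
  proof -
    show "0 < xm" unfolding xm_S using finS neS by (subst Min_gr_iff) (auto simp: S_def)
    have "xm \<le> A r q0" unfolding xm_S using finS q0 by (intro Min_le) (auto simp: S_def)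
    thus "xm \<le> 1" using A1[of r q0] by simp
    show "xm \<le> A p q" if "A p q > 0" for p q
      unfolding xm_S using finS that by (intro Min_le) (auto simp: S_def)
  qed
  define K where "K = real (card (UNIV::'q set)) / xm ^ card (UNIV::'q set)"
  have hK: "h p \<le> K" for p unfolding K_def
    by (rule hit_bound[OF nn rows sc xm_facts hr hp])
  have K0: "K \<ge> 0" unfolding K_def using xm_facts by simp
  have lin_sum: "(\<Sum>q\<in>UNIV. A p q * (c1 * h q + c2 * v q)) = c1 * (\<Sum>q\<in>UNIV. A p q * h q) + c2 * (\<Sum>q\<in>UNIV. A p q * v q)" for p c1 c2
    by (simp add: distrib_left sum.distrib sum_distrib_left mult.left_commute)
  have vup: "v p \<le> (1 - t) * K" for p
  proof -
    have "(\<lambda>q. (-(1 - t)) * h q + 1 * v q) p \<le> 0"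
    proof (rule max_principle[OF nn rows sc, of _ r])
      show "(- (1 - t)) * h r + 1 * v r \<le> 0" using hr vr by simp
      fix p assume "p \<noteq> r"
      show "(- (1 - t)) * h p + 1 * v p \<le> (\<Sum>q\<in>UNIV. A p q * ((- (1 - t)) * h q + 1 * v q))"
        unfolding lin_sum using hp[OF \<open>p \<noteq> r\<close>] vp[OF \<open>p \<noteq> r\<close>] s_bd[of p]
        by (simp add: algebra_simps)
    qed
    hence "v p \<le> (1 - t) * h p" by (simp add: algebra_simps)
    also have "\<dots> \<le> (1 - t) * K" using hK[of p] t_bd by (intro mult_left_mono) auto
    finally show ?thesis .
  qed
  have vlo: "(-1 - t) * K \<le> v p" for p
  proof -
    have "(\<lambda>q. (-1 - t) * h q + (-1) * v q) p \<le> 0"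
    proof (rule max_principle[OF nn rows sc, of _ r])
      show "(-1 - t) * h r + (-1) * v r \<le> 0" using hr vr by simp
      fix p assume "p \<noteq> r"
      show "(-1 - t) * h p + (-1) * v p \<le> (\<Sum>q\<in>UNIV. A p q * ((-1 - t) * h q + (-1) * v q))"
        unfolding lin_sum using hp[OF \<open>p \<noteq> r\<close>] vp[OF \<open>p \<noteq> r\<close>] s_bd[of p]
        by (simp add: algebra_simps)
    qed
    hence "(-1 - t) * h p \<le> v p" by (simp add: algebra_simps)
    moreover have "(-1 - t) * K \<le> (-1 - t) * h p" using hK[of p] t_bd by (intro mult_left_mono_neg) auto
    ultimately show ?thesis by simp
  qed
  have range_bd: "Max (range v) - Min (range v) \<le> 2 * K"
  proof -
    have "Max (range v) \<le> (1 - t) * K" using vup by simp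
    moreover have "(-1 - t) * K \<le> Min (range v)" using vlo by simp
    ultimately show ?thesis by (simp add: algebra_simps del: Max_le_iff Min_ge_iff)
  qed
  have mart: "pOC_martingale P0 PP (m_proc v t)"
    unfolding pOC_martingale_def
  proof (intro allI impI)
    fix x :: "nat \<Rightarrow> 'q config" and n :: nat
    obtain p c where xn: "x n = (p, c)" by (cases "x n")
    define Mx where "Mx y = m_proc v t (x(Suc n := y)) (Suc n)" for y
    have split: "(\<Sum>y\<in>UNIV \<times> {..Suc (snd (x n))}. MA_prob P0 PP (x n) y * m_proc v t (x(Suc n := y)) (Suc n))
       = (\<Sum>q\<in>UNIV. \<Sum>c'\<in>{..Suc c}. MA_prob P0 PP (p, c) (q, c') * Mx (q, c'))"
      using xn by (simp add: sum_prod_split Mx_def)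
    have tot: "(\<Sum>q\<in>UNIV. \<Sum>c'\<in>{..Suc c}. MA_prob P0 PP (p, c) (q, c')) = 1"
    proof (cases "c = 0")
      case True
      have "(\<Sum>c'\<in>{..Suc c}. MA_prob P0 PP (p, c) (q, c')) = P0 p 0 q + P0 p 1 q" for q
        using True by (simp add: atMost_Suc MA_prob_def)
      thus ?thesis using P0row[of p] by simp
    next
      case False
      hence c1: "c \<ge> 1" by simp
      have "(\<Sum>c'\<in>{..Suc c}. MA_prob P0 PP (p, c) (q, c')) = (\<Sum>c'\<in>{..Suc c}. PP p (int c' - int c) q * 1)" for q
        using False by (simp add: MA_prob_def)
      also have "\<dots> q = PP p (-1) q + PP p 0 q + PP p 1 q" for q
        using sum_succ_pos[of c "\<lambda>d. PP p d q" "\<lambda>_. 1", OF c1 PPz] by simp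
      finally show ?thesis using PProw[of p] by simp
    qed
    show "(\<Sum>y\<in>UNIV \<times> {..Suc (snd (x n))}. MA_prob P0 PP (x n) y * m_proc v t (x(Suc n := y)) (Suc n)) = m_proc v t x n"
    proof (cases "\<forall>j<Suc n. 1 \<le> snd (x j)")
      case False
      have "Mx y = m_proc v t x n" for y
      proof -
        have "\<not> (\<forall>j<Suc n. 1 \<le> snd ((x(Suc n := y)) j))" using False by simp
        hence "Mx y = m_proc v t (x(Suc n := y)) n" unfolding Mx_def m_proc.simps(2) by (rule if_not_P)
        also have "\<dots> = m_proc v t x n" by (rule m_local) simp
        finally show ?thesis .
      qed
      hence "(\<Sum>q\<in>UNIV. \<Sum>c'\<in>{..Suc c}. MA_prob P0 PP (p, c) (q, c') * Mx (q, c'))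
          = (\<Sum>q\<in>UNIV. \<Sum>c'\<in>{..Suc c}. MA_prob P0 PP (p, c) (q, c')) * m_proc v t x n"
        by (simp only: sum_distrib_right)
      thus ?thesis using split tot by simp
    next
      case True
      have c1: "c \<ge> 1" using True[rule_format, of n] xn by simp
      have mn: "m_proc v t x n = real c + v p - real n * t" using m_active[of n x v t] True xn by simp
      define T where "T = real (Suc n) * t"
      have Mq: "Mx (q, c') = real c' + v q - T" for q c'
        unfolding Mx_def T_def using True by simp
      have "(\<Sum>c'\<in>{..Suc c}. MA_prob P0 PP (p, c) (q, c') * Mx (q, c'))
          = (\<Sum>c'\<in>{..Suc c}. PP p (int c' - int c) q * (real c' + v q - T))" for q
        using c1 by (simp add: MA_prob_def Mq)
      also have "\<dots> q = PP p (-1) q * (real (c - 1) + v q - T) + PP p 0 q * (real c + v q - T)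
          + PP p 1 q * (real (Suc c) + v q - T)" for q
        by (rule sum_succ_pos[of c "\<lambda>d. PP p d q" "\<lambda>c'. real c' + v q - T", OF c1 PPz])
      also have "\<dots> q = A p q * (real c - T) + A p q * v q + (PP p 1 q - PP p (-1) q)" for q
        using c1 by (simp add: A_eq of_nat_diff algebra_simps)
      finally have "(\<Sum>q\<in>UNIV. \<Sum>c'\<in>{..Suc c}. MA_prob P0 PP (p, c) (q, c') * Mx (q, c'))
          = (\<Sum>q\<in>UNIV. A p q) * (real c - T) + (\<Sum>q\<in>UNIV. A p q * v q) + s p"
        by (simp add: sum.distrib sum_distrib_right s_eq)
      also have "\<dots> = real c + v p - real n * t"
        using rows[of p] poisson[of p] unfolding T_def by (simp add: algebra_simps)
      finally show ?thesis using split mn by simp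
    qed
  qed
  show ?thesis
    using mart range_bd unfolding K_def xm_def A_def t_def by (intro exI[of _ v]) simp
qed

end
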